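(* Let $R=\{u\in L:(u,u)=2\}$. Then $W(x)=\{\alpha x+\beta y+\gamma z\in R:\alpha\equiv1,\ \beta\equiv0,\ \gamma\equiv0 \pmod 2\}$, $W(y)=\{\alpha x+\beta y+\gamma z\in R:\beta\equiv1,\ \alpha\equiv0,\ \gamma\equiv0 \pmod 2\}$, $W(z)=\{\alpha x+\beta y+\gamma z\in R:\gamma\equiv1,\ \alpha\equiv0,\ \beta\equiv0 \pmod 2\}$.
   Context: $\mathbb F$ is a field of characteristic zero, $\mathfrak{sl}_2$ the Lie algebra of $2\times2$ trace-zero matrices over $\mathbb F$ with trace form $(u,v)=\mathrm{tr}(uv)$. Equitable basis: $x=\begin{pmatrix}1&0\\0&-1\end{pmatrix}$, $y=\begin{pmatrix}-1&2\\0&1\end{pmatrix}$, $z=\begin{pmatrix}-1&0\\-2&1\end{pmatrix}$, $L=\mathbb Zx\oplus\mathbb Zy\oplus\mathbb Zz$. For $u\in\{x,y,z\}$, $r_u(v)=v-(u,v)u$, and $W=\langle r_x,r_y,r_z\rangle$ (the Weyl group of the Kac–Moody algebra with Cartan matrix having $2$ on the diagonal and $-2$ off the diagonal, whose set of real roots equals $R$). $W(u)$ denotes the $W$-orbit of $u$. *)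

theory Defs
  imports "HOL-Analysis.Analysis"
begin

definition tr2 :: "'a::comm_ring_1^2^2 \<Rightarrow> 'a" where
  "tr2 A = A$1$1 + A$2$2"

definition sl2 :: "('a::comm_ring_1^2^2) set" where
  "sl2 = {A. tr2 A = 0}"

definition tform :: "'a::comm_ring_1^2^2 \<Rightarrow> 'a^2^2 \<Rightarrow> 'a" where
  "tform u v = tr2 (u ** v)"

definition ex :: "'a::comm_ring_1^2^2" where
  "ex = (\<chi> i j. if i = 1 \<and> j = 1 then 1 else if i = 2 \<and> j = 2 then -1 else 0)"

definition ey :: "'a::comm_ring_1^2^2" where
  "ey = (\<chi> i j. if i = 1 \<and> j = 1 then -1 else if i = 1 \<and> j = 2 then 2
               else if i = 2 \<and> j = 2 then 1 else 0)"

definition ez :: "'a::comm_ring_1^2^2" where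
  "ez = (\<chi> i j. if i = 1 \<and> j = 1 then -1 else if i = 2 \<and> j = 1 then -2
               else if i = 2 \<and> j = 2 then 1 else 0)"

definition icomb :: "int \<Rightarrow> int \<Rightarrow> int \<Rightarrow> 'a::comm_ring_1^2^2" where
  "icomb \<alpha> \<beta> \<gamma> = (\<chi> i j. of_int \<alpha> * ex$i$j + of_int \<beta> * ey$i$j + of_int \<gamma> * ez$i$j)"

definition Lat :: "('a::comm_ring_1^2^2) set" where
  "Lat = {icomb \<alpha> \<beta> \<gamma> | \<alpha> \<beta> \<gamma>. True}"

definition Roots :: "('a::comm_ring_1^2^2) set" where
  "Roots = {u \<in> Lat. tform u u = 2}"

definition refl :: "'a::comm_ring_1^2^2 \<Rightarrow> 'a^2^2 \<Rightarrow> 'a^2^2" where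
  "refl u v = (\<chi> i j. v$i$j - tform u v * u$i$j)"

text \<open>Since each
  generator is an involution, the subgroup generated coincides with the set of
  all finite composites of generators (including the identity).\<close>
inductive_set Weyl :: "('a::comm_ring_1^2^2 \<Rightarrow> 'a^2^2) set" where
  Weyl_id: "id \<in> Weyl"
| Weyl_gen: "w \<in> Weyl \<Longrightarrow> u \<in> {ex, ey, ez} \<Longrightarrow> refl u \<circ> w \<in> Weyl"

definition orbit :: "'a::comm_ring_1^2^2 \<Rightarrow> ('a^2^2) set" where
  "orbit u = {w u | w. w \<in> Weyl}"

end

theory Submission imports Defs begin

definition qf :: "int \<Rightarrow> int \<Rightarrow> int \<Rightarrow> int" where
  "qf a b c = a^2 + b^2 + c^2 - 2*a*b - 2*b*c - 2*c*a"

lemma icomb_entries: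
  "(icomb a b c :: 'a::comm_ring_1^2^2)$1$1 = of_int (a - b - c)"
  "(icomb a b c :: 'a::comm_ring_1^2^2)$1$2 = of_int (2*b)"
  "(icomb a b c :: 'a::comm_ring_1^2^2)$2$1 = of_int (-2*c)"
  "(icomb a b c :: 'a::comm_ring_1^2^2)$2$2 = of_int (b + c - a)"
  by (simp_all add: icomb_def ex_def ey_def ez_def algebra_simps)

lemma icomb_eq: "(icomb a b c :: 'a::comm_ring_1^2^2) = icomb a' b' c' \<longleftrightarrow>
  (\<forall>i j. (icomb a b c :: 'a^2^2)$i$j = icomb a' b' c' $i$j)"
  by (simp add: vec_eq_iff)

lemma icomb_inj: "(icomb a b c :: 'a::field_char_0^2^2) = icomb a' b' c' \<Longrightarrow> a = a' \<and> b = b' \<and> c = c'"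
proof -
  assume h: "(icomb a b c :: 'a::field_char_0^2^2) = icomb a' b' c'"
  have "(icomb a b c :: 'a^2^2)$1$1 = icomb a' b' c' $1$1"
       "(icomb a b c :: 'a^2^2)$1$2 = icomb a' b' c' $1$2"
       "(icomb a b c :: 'a^2^2)$2$1 = icomb a' b' c' $2$1" using h by auto
  then have "a - b - c = a' - b' - c'" "2*b = 2*b'" "-2*c = -2*c'"
    unfolding icomb_entries of_int_eq_iff by auto
  then show ?thesis by auto
qed

lemma icomb_ext: "(\<And>i j. A$i$j = (B::'a^2^2)$i$j) \<Longrightarrow> A = B"
  by (simp add: vec_eq_iff)

lemma mat_eq2: "(A::'a^2^2) = B \<longleftrightarrow> A$1$1 = B$1$1 \<and> A$1$2 = B$1$2 \<and> A$2$1 = B$2$1 \<and> A$2$2 = B$2$2"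
  by (auto simp: vec_eq_iff forall_2)

lemma ex_icomb: "ex = (icomb 1 0 0 :: 'a::comm_ring_1^2^2)"
  unfolding mat_eq2 icomb_entries by (simp add: ex_def)
lemma ey_icomb: "ey = (icomb 0 1 0 :: 'a::comm_ring_1^2^2)"
  unfolding mat_eq2 icomb_entries by (simp add: ey_def)
lemma ez_icomb: "ez = (icomb 0 0 1 :: 'a::comm_ring_1^2^2)"
  unfolding mat_eq2 icomb_entries by (simp add: ez_def)

lemma tform_icomb: "tform (icomb a b c :: 'a::comm_ring_1^2^2) (icomb a' b' c') =
   of_int (2*a*a' + 2*b*b' + 2*c*c' - 2*(a*b'+a'*b) - 2*(b*c'+b'*c) - 2*(a*c'+a'*c))"
proof -
  have "tform (icomb a b c :: 'a::comm_ring_1^2^2) (icomb a' b' c') =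
     of_int ((a-b-c)*(a'-b'-c') + (2*b)*(-2*c') + ((-2*c)*(2*b') + (b+c-a)*(b'+c'-a')))"
    unfolding tform_def tr2_def matrix_matrix_mult_def
    by (simp add: sum_2 icomb_entries algebra_simps)
  also have "\<dots> = of_int (2*a*a' + 2*b*b' + 2*c*c' - 2*(a*b'+a'*b) - 2*(b*c'+b'*c) - 2*(a*c'+a'*c))"
    by (rule arg_cong[where f=of_int]) algebra
  finally show ?thesis .
qed


lemma tform_self: "tform (icomb a b c :: 'a::comm_ring_1^2^2) (icomb a b c) = of_int (2 * qf a b c)"
  unfolding tform_icomb qf_def by (rule arg_cong[where f=of_int]) algebra

lemma refl_icomb: "refl (icomb p q r :: 'a::comm_ring_1^2^2) (icomb a b c) =
  icomb (a - (2*p*a + 2*q*b + 2*r*c - 2*(p*b+a*q) - 2*(q*c+b*r) - 2*(p*c+a*r))*p)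
        (b - (2*p*a + 2*q*b + 2*r*c - 2*(p*b+a*q) - 2*(q*c+b*r) - 2*(p*c+a*r))*q)
        (c - (2*p*a + 2*q*b + 2*r*c - 2*(p*b+a*q) - 2*(q*c+b*r) - 2*(p*c+a*r))*r)"
  unfolding mat_eq2 refl_def tform_icomb
  by (simp add: icomb_entries algebra_simps)

lemma refl_ex: "refl ex (icomb a b c :: 'a::comm_ring_1^2^2) = icomb (2*b+2*c-a) b c"
  unfolding ex_icomb refl_icomb by (simp add: algebra_simps)
lemma refl_ey: "refl ey (icomb a b c :: 'a::comm_ring_1^2^2) = icomb a (2*a+2*c-b) c"
  unfolding ey_icomb refl_icomb by (simp add: algebra_simps)
lemma refl_ez: "refl ez (icomb a b c :: 'a::comm_ring_1^2^2) = icomb a b (2*a+2*b-c)"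
  unfolding ez_icomb refl_icomb by (simp add: algebra_simps)


lemma qf_r: "qf (2*b+2*c-a) b c = qf a b c" "qf a (2*a+2*c-b) c = qf a b c" "qf a b (2*a+2*b-c) = qf a b c"
  unfolding qf_def by algebra+

lemma mod_r: "(2*b+2*c-a) mod 2 = (a::int) mod 2"
  by presburger

lemma weyl_inv: "w \<in> Weyl \<Longrightarrow> \<exists>a' b' c'. w (icomb a b c :: 'a::comm_ring_1^2^2) = icomb a' b' c'
   \<and> qf a' b' c' = qf a b c \<and> a' mod 2 = a mod 2 \<and> b' mod 2 = b mod 2 \<and> c' mod 2 = c mod 2"
proof (induction w rule: Weyl.induct)
  case Weyl_id
  then show ?case by auto
next
  case (Weyl_gen w u)
  then obtain a' b' c' where h: "w (icomb a b c :: 'a^2^2) = icomb a' b' c'"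
    "qf a' b' c' = qf a b c" "a' mod 2 = a mod 2" "b' mod 2 = b mod 2" "c' mod 2 = c mod 2" by blast
  have u: "u = ex \<or> u = ey \<or> u = ez" using Weyl_gen.hyps(2) by simp
  moreover have ?case if "u = ex"
    apply (rule exI[of _ "2*b'+2*c'-a'"], rule exI[of _ b'], rule exI[of _ c'])
    using h that qf_r(1)[of b' c' a'] mod_r[of b' c' a'] by (simp add: refl_ex)
  moreover have ?case if "u = ey"
    apply (rule exI[of _ a'], rule exI[of _ "2*a'+2*c'-b'"], rule exI[of _ c'])
    using h that qf_r(2)[of a' c' b'] mod_r[of a' c' b'] by (simp add: refl_ey)
  moreover have ?case if "u = ez"
    apply (rule exI[of _ a'], rule exI[of _ b'], rule exI[of _ "2*a'+2*b'-c'"])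
    using h that qf_r(3)[of a' b' c'] mod_r[of a' b' c'] by (simp add: refl_ez)
  ultimately show ?case by blast
qed

lemma core: "0 \<le> b \<Longrightarrow> 0 \<le> c \<Longrightarrow> b \<le> a \<Longrightarrow> c \<le> a \<Longrightarrow> qf a b c = 1 \<Longrightarrow>
   \<not> (b = 0 \<and> c = 0) \<Longrightarrow> (b+c)*(b+c-a) < (0::int)"
proof -
  assume h: "0 \<le> b" "0 \<le> c" "b \<le> a" "c \<le> a" "qf a b c = 1" "\<not> (b = 0 \<and> c = 0)"
  have bc: "b + c > 0" using h by auto
  have q: "(b+c-a)^2 = 1 + 4*b*c" using h(5) unfolding qf_def by algebra
  have "a > b + c"
  proof (rule ccontr)
    assume "\<not> a > b + c"
    then have d: "0 \<le> b+c-a" "b+c-a \<le> b" "b+c-a \<le> c" using h by auto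
    then have "(b+c-a)*(b+c-a) \<le> b*c" by (intro mult_mono) auto
    moreover have "b*c \<ge> 0" using h by simp
    ultimately show False using q by (simp add: power2_eq_square)
  qed
  then show ?thesis using bc by (simp add: mult_pos_neg)
qed

lemma qf_perm: "qf a b c = qf b a c" "qf a b c = qf c b a" "qf a b c = qf a c b"
  "qf (-a) (-b) (-c) = qf a b c"
  unfolding qf_def by algebra+

lemma core_all: "0 \<le> a \<Longrightarrow> 0 \<le> b \<Longrightarrow> 0 \<le> c \<Longrightarrow> qf a b c = 1 \<Longrightarrow>
   \<not> ((b=0\<and>c=0) \<or> (a=0\<and>c=0) \<or> (a=0\<and>b=0)) \<Longrightarrow>
   (b+c)*(b+c-a) < 0 \<or> (a+c)*(a+c-b) < 0 \<or> (a+b)*(a+b-c) < (0::int)"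
proof -
  assume h: "0 \<le> a" "0 \<le> b" "0 \<le> c" "qf a b c = 1"
    "\<not> ((b=0\<and>c=0) \<or> (a=0\<and>c=0) \<or> (a=0\<and>b=0))"
  consider "b \<le> a \<and> c \<le> a" | "a \<le> b \<and> c \<le> b" | "a \<le> c \<and> b \<le> c" by linarith
  then show ?thesis
  proof cases
    case 1 then show ?thesis using core[of b c a] h by auto
  next
    case 2 then show ?thesis using core[of a c b] h qf_perm by auto
  next
    case 3 then show ?thesis using core[of a b c] h qf_perm by auto
  qed
qed

lemma descent: "qf a b c = 1 \<Longrightarrow>
   \<not> ((b=0\<and>c=0) \<or> (a=0\<and>c=0) \<or> (a=0\<and>b=0)) \<Longrightarrow>
   (b+c)*(b+c-a) < 0 \<or> (a+c)*(a+c-b) < 0 \<or> (a+b)*(a+b-c) < (0::int)"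
proof -
  assume h: "qf a b c = 1" "\<not> ((b=0\<and>c=0) \<or> (a=0\<and>c=0) \<or> (a=0\<and>b=0))"
  have e1: "4*(b*c) = (a-b-c)^2 - 1" using h(1) unfolding qf_def by algebra
  have e2: "4*(a*c) = (b-a-c)^2 - 1" using h(1) unfolding qf_def by algebra
  have e3: "4*(a*b) = (c-a-b)^2 - 1" using h(1) unfolding qf_def by algebra
  have s1: "4*(b*c) \<ge> -1" unfolding e1 using zero_le_power2[of "a-b-c"] by linarith
  have s2: "4*(a*c) \<ge> -1" unfolding e2 using zero_le_power2[of "b-a-c"] by linarith
  have s3: "4*(a*b) \<ge> -1" unfolding e3 using zero_le_power2[of "c-a-b"] by linarith
  have p: "b*c \<ge> 0" "a*c \<ge> 0" "a*b \<ge> 0" using s1 s2 s3 by linarith+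
  consider "0 \<le> a \<and> 0 \<le> b \<and> 0 \<le> c" | "a \<le> 0 \<and> b \<le> 0 \<and> c \<le> 0"
    using p by (auto simp: zero_le_mult_iff)
  then show ?thesis
  proof cases
    case 1 then show ?thesis using core_all h by blast
  next
    case 2
    have "((-b)+(-c))*((-b)+(-c)-(-a)) < 0 \<or> ((-a)+(-c))*((-a)+(-c)-(-b)) < 0 \<or> ((-a)+(-b))*((-a)+(-b)-(-c)) < 0"
      using core_all[of "-a" "-b" "-c"] 2 h qf_perm(4) by auto
    then show ?thesis by (simp add: algebra_simps)
  qed
qed


lemma orbit_self: "u \<in> orbit u"
  unfolding orbit_def by (rule CollectI, rule exI[of _ id]) (simp add: Weyl.Weyl_id)

lemma orbit_refl: "v \<in> orbit u \<Longrightarrow> g \<in> {ex, ey, ez} \<Longrightarrow> refl g v \<in> orbit u"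
proof -
  assume "v \<in> orbit u" "g \<in> {ex, ey, ez}"
  then obtain w where "w \<in> Weyl" "v = w u" unfolding orbit_def by blast
  then have "refl g \<circ> w \<in> Weyl" "refl g v = (refl g \<circ> w) u" using \<open>g \<in> _\<close>
    by (auto intro: Weyl.Weyl_gen)
  then show ?thesis unfolding orbit_def by blast
qed

lemma reach: "qf a b c = 1 \<Longrightarrow>
  (icomb a b c :: 'a::field_char_0^2^2) \<in> orbit (icomb (a mod 2) (b mod 2) (c mod 2))"
proof (induction "nat (a^2+b^2+c^2)" arbitrary: a b c rule: less_induct)
  case less
  show ?case
  proof (cases "(b=0\<and>c=0) \<or> (a=0\<and>c=0) \<or> (a=0\<and>b=0)")
    case True
    moreover have ?thesis if h: "b=0" "c=0"
    proof -
      have "a^2 = 1" using less.prems h unfolding qf_def by simp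
      then have "a = 1 \<or> a = -1" using power2_eq_1_iff by blast
      moreover have "(icomb (-1) 0 0 :: 'a^2^2) = refl ex (icomb 1 0 0)"
        unfolding refl_ex by simp
      ultimately show ?thesis using h orbit_self orbit_refl by force
    qed
    moreover have ?thesis if h: "a=0" "c=0"
    proof -
      have "b^2 = 1" using less.prems h unfolding qf_def by simp
      then have "b = 1 \<or> b = -1" using power2_eq_1_iff by blast
      moreover have "(icomb 0 (-1) 0 :: 'a^2^2) = refl ey (icomb 0 1 0)"
        unfolding refl_ey by simp
      ultimately show ?thesis using h orbit_self orbit_refl by force
    qed
    moreover have ?thesis if h: "a=0" "b=0"
    proof -
      have "c^2 = 1" using less.prems h unfolding qf_def by simp
      then have "c = 1 \<or> c = -1" using power2_eq_1_iff by blast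
      moreover have "(icomb 0 0 (-1) :: 'a^2^2) = refl ez (icomb 0 0 1)"
        unfolding refl_ez by simp
      ultimately show ?thesis using h orbit_self orbit_refl by force
    qed
    ultimately show ?thesis by blast
  next
    case False
    note d = descent[OF less.prems False]
    moreover have ?thesis if h: "(b+c)*(b+c-a) < 0"
    proof -
      define a' where "a' = 2*b+2*c-a"
      have "a'^2 - a^2 = 4*((b+c)*(b+c-a))" unfolding a'_def by algebra
      then have "nat (a'^2+b^2+c^2) < nat (a^2+b^2+c^2)" using h by (subst nat_less_eq_zless) (auto intro!: add_nonneg_nonneg)
      moreover have "qf a' b c = 1" using qf_r(1)[of b c a] less.prems a'_def by simp
      ultimately have "(icomb a' b c :: 'a^2^2) \<in> orbit (icomb (a' mod 2) (b mod 2) (c mod 2))"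
        using less.hyps by blast
      moreover have "a' mod 2 = a mod 2" unfolding a'_def by (rule mod_r)
      moreover have "refl ex (icomb a' b c :: 'a^2^2) = icomb a b c" unfolding refl_ex a'_def by simp
      ultimately show ?thesis using orbit_refl[of "icomb a' b c :: 'a^2^2" _ ex] by auto
    qed
    moreover have ?thesis if h: "(a+c)*(a+c-b) < 0"
    proof -
      define b' where "b' = 2*a+2*c-b"
      have "b'^2 - b^2 = 4*((a+c)*(a+c-b))" unfolding b'_def by algebra
      then have "nat (a^2+b'^2+c^2) < nat (a^2+b^2+c^2)" using h by (subst nat_less_eq_zless) (auto intro!: add_nonneg_nonneg)
      moreover have "qf a b' c = 1" using qf_r(2)[of a c b] less.prems b'_def by simp
      ultimately have "(icomb a b' c :: 'a^2^2) \<in> orbit (icomb (a mod 2) (b' mod 2) (c mod 2))"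
        using less.hyps by blast
      moreover have "b' mod 2 = b mod 2" unfolding b'_def by (rule mod_r)
      moreover have "refl ey (icomb a b' c :: 'a^2^2) = icomb a b c" unfolding refl_ey b'_def by simp
      ultimately show ?thesis using orbit_refl[of "icomb a b' c :: 'a^2^2" _ ey] by auto
    qed
    moreover have ?thesis if h: "(a+b)*(a+b-c) < 0"
    proof -
      define c' where "c' = 2*a+2*b-c"
      have "c'^2 - c^2 = 4*((a+b)*(a+b-c))" unfolding c'_def by algebra
      then have "nat (a^2+b^2+c'^2) < nat (a^2+b^2+c^2)" using h by (subst nat_less_eq_zless) (auto intro!: add_nonneg_nonneg)
      moreover have "qf a b c' = 1" using qf_r(3)[of a b c] less.prems c'_def by simp
      ultimately have "(icomb a b c' :: 'a^2^2) \<in> orbit (icomb (a mod 2) (b mod 2) (c' mod 2))"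
        using less.hyps by blast
      moreover have "c' mod 2 = c mod 2" unfolding c'_def by (rule mod_r)
      moreover have "refl ez (icomb a b c' :: 'a^2^2) = icomb a b c" unfolding refl_ez c'_def by simp
      ultimately show ?thesis using orbit_refl[of "icomb a b c' :: 'a^2^2" _ ez] by auto
    qed
    ultimately show ?thesis by blast
  qed
qed


lemma Roots_icomb: "(icomb a b c :: 'a::field_char_0^2^2) \<in> Roots \<longleftrightarrow> qf a b c = 1"
proof -
  have "(icomb a b c :: 'a^2^2) \<in> Lat" unfolding Lat_def by blast
  moreover have "(of_int (2 * qf a b c) :: 'a) = 2 \<longleftrightarrow> qf a b c = 1"
  proof -
    have "(2::'a) = of_int 2" by simp
    then have "(of_int (2 * qf a b c) :: 'a) = 2 \<longleftrightarrow> 2 * qf a b c = 2"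
      by (metis of_int_eq_iff)
    then show ?thesis by simp
  qed
  ultimately show ?thesis by (simp add: Roots_def tform_self)
qed

lemma orbit_char:
  assumes "qf p q r = 1" "p mod 2 = p" "q mod 2 = q" "r mod 2 = r"
  shows "orbit (icomb p q r :: 'a::field_char_0^2^2) =
     {u. \<exists>a b c. u = icomb a b c \<and> u \<in> Roots \<and> a mod 2 = p \<and> b mod 2 = q \<and> c mod 2 = r}"
proof
  show "orbit (icomb p q r :: 'a^2^2) \<subseteq> {u. \<exists>a b c. u = icomb a b c \<and> u \<in> Roots \<and> a mod 2 = p \<and> b mod 2 = q \<and> c mod 2 = r}"
  proof
    fix u assume "u \<in> orbit (icomb p q r :: 'a^2^2)"
    then obtain w where w: "w \<in> Weyl" "u = w (icomb p q r)" unfolding orbit_def by blast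
    from weyl_inv[OF w(1), of p q r] obtain a b c where
      "w (icomb p q r :: 'a^2^2) = icomb a b c" "qf a b c = qf p q r" "a mod 2 = p mod 2"
      "b mod 2 = q mod 2" "c mod 2 = r mod 2" by blast
    then show "u \<in> {u. \<exists>a b c. u = icomb a b c \<and> u \<in> Roots \<and> a mod 2 = p \<and> b mod 2 = q \<and> c mod 2 = r}"
      using w assms by (auto simp: Roots_icomb)
  qed
next
  show "{u. \<exists>a b c. u = icomb a b c \<and> u \<in> Roots \<and> a mod 2 = p \<and> b mod 2 = q \<and> c mod 2 = r} \<subseteq> orbit (icomb p q r :: 'a^2^2)"
    using reach by (auto simp: Roots_icomb)
qed

theorem proposition7p12:
  shows "orbit (ex :: 'a::field_char_0^2^2) =
           {u. \<exists>\<alpha> \<beta> \<gamma>. u = icomb \<alpha> \<beta> \<gamma> \<and> u \<in> Roots \<and> odd \<alpha> \<and> even \<beta> \<and> even \<gamma>}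
      \<and> orbit (ey :: 'a^2^2) =
           {u. \<exists>\<alpha> \<beta> \<gamma>. u = icomb \<alpha> \<beta> \<gamma> \<and> u \<in> Roots \<and> odd \<beta> \<and> even \<alpha> \<and> even \<gamma>}
      \<and> orbit (ez :: 'a^2^2) =
           {u. \<exists>\<alpha> \<beta> \<gamma>. u = icomb \<alpha> \<beta> \<gamma> \<and> u \<in> Roots \<and> odd \<gamma> \<and> even \<alpha> \<and> even \<beta>}"
proof -
  have q: "qf 1 0 0 = 1" "qf 0 1 0 = 1" "qf 0 0 1 = 1" unfolding qf_def by simp_all
  have x: "orbit (ex :: 'a^2^2) = {u. \<exists>a b c. u = icomb a b c \<and> u \<in> Roots \<and> a mod 2 = 1 \<and> b mod 2 = 0 \<and> c mod 2 = 0}"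
    unfolding ex_icomb by (rule orbit_char) (use q in simp_all)
  have y: "orbit (ey :: 'a^2^2) = {u. \<exists>a b c. u = icomb a b c \<and> u \<in> Roots \<and> a mod 2 = 0 \<and> b mod 2 = 1 \<and> c mod 2 = 0}"
    unfolding ey_icomb by (rule orbit_char) (use q in simp_all)
  have z: "orbit (ez :: 'a^2^2) = {u. \<exists>a b c. u = icomb a b c \<and> u \<in> Roots \<and> a mod 2 = 0 \<and> b mod 2 = 0 \<and> c mod 2 = 1}"
    unfolding ez_icomb by (rule orbit_char) (use q in simp_all)
  have m: "\<And>a::int. a mod 2 \<noteq> 0 \<longleftrightarrow> a mod 2 = 1" by presburger
  show ?thesis unfolding x y z odd_iff_mod_2_eq_one even_iff_mod_2_eq_zero m
    apply (intro conjI Collect_cong iffI)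
    apply (elim exE conjE; intro exI conjI; assumption)+
    done
qed

end
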